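(* Let $\ell,m,n$ be positive integers with $\ell<n$, $m<n$, $\gcd(m,n)=1$, let $\mathcal{S}=\mathcal{F}[\ell,m,n]$, and let $k\in\mathbb{Z}^+$ and $\chi\in\mathbb{Z}$ with $|\chi|<k$. Then, as words, $$\mathcal{G}^+[k,\chi]=\begin{cases}\mathcal{S}^{k+\chi}\,\hat{\mathcal{X}}\,\big(\mathcal{S}^{\overline0}\big)^{-\chi}, & \chi=-k+1,\dots,-1,\\ \big(\mathcal{S}^{\overline{\ell d}}\big)^{\chi}\,\mathcal{S}^{k-\chi}\,\hat{\mathcal{X}}, & \chi=0,\dots,k-1,\end{cases}$$ $$\mathcal{G}^-[k,\chi]=\begin{cases}\mathcal{S}\,\big(\mathcal{S}^{\overline0}\big)^{-\chi}\,\hat{\mathcal{Y}}\,\mathcal{S}^{k+\chi-1}, & \chi=-k+1,\dots,0,\\ \mathcal{S}^{\overline{\ell d}}\,\hat{\mathcal{Y}}\,\mathcal{S}^{k-\chi}\,\big(\mathcal{S}^{\overline{\ell d}}\big)^{\chi-1}, & \chi=1,\dots,k-1.\end{cases}$$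
   Context: For positive integers $\ell<n$, $m<n$, $\gcd(m,n)=1$, $\mathcal{F}[\ell,m,n]$ is the $n$-periodic sequence with $\mathcal{F}[\ell,m,n]_i=L$ if $im\bmod n<\ell$ and $R$ otherwise, identified with the word $\mathcal{F}_0\cdots\mathcal{F}_{n-1}$. $d\in\{1,\dots,n-1\}$ is the inverse of $m$ mod $n$. Words over $\{L,R\}$: juxtaposition is concatenation, $\mathcal{W}^p$ is the concatenation of $p$ copies ($\mathcal{W}^0$ empty). $\mathcal{S}^{\overline j}$ is the word (length $n$) differing from $\mathcal{S}$ exactly at index $j\bmod n$. $\hat{\mathcal{X}}=\mathcal{S}_0\cdots\mathcal{S}_{n-d-1}$ and $\hat{\mathcal{Y}}=\mathcal{S}_{n-d}\cdots\mathcal{S}_{n-1}$. The left and right Farey roots of $\frac mn$ are the fractions $\frac{m^-}{n^-}<\frac{m^+}{n^+}$ with $m^\pm\ge0$, $n^\pm\ge1$, $m^-+m^+=m$, $n^-+n^+=n$, $m^+n^--m^-n^+=1$. Put $\ell^+=\lceil\ell n^+/n\rceil$, $\ell^-=\lfloor\ell n^-/n\rfloor$, $\ell_k^\pm=k\ell+\ell^\pm$, $m_k^\pm=km+m^\pm$, $n_k^\pm=kn+n^\pm$, and $\mathcal{G}^\pm[k,\chi]=\mathcal{F}[\ell_k^\pm+\chi,m_k^\pm,n_k^\pm]$, identified with its word of length $n_k^\pm$. *)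

theory Defs
  imports Complex_Main
begin

datatype LR = L | R

fun flipLR :: "LR \<Rightarrow> LR" where
  "flipLR L = R" | "flipLR R = L"

definition Fword :: "int \<Rightarrow> nat \<Rightarrow> nat \<Rightarrow> LR list" where
  "Fword l m n = map (\<lambda>i. if int ((i * m) mod n) < l then L else R) [0..<n]"

definition wpow :: "'a list \<Rightarrow> nat \<Rightarrow> 'a list" where
  "wpow W p = concat (replicate p W)"

text \<open>S with overline j: the word differing from S exactly at index j mod n.\<close>
definition flip_at :: "LR list \<Rightarrow> nat \<Rightarrow> LR list" where
  "flip_at S j = S[j mod length S := flipLR (S ! (j mod length S))]"

end

theory Submission
  imports Defs
begin


lemma wpow_len[simp]: "length (wpow W p) = p * length W"
  by (induction p) (auto simp: wpow_def)

lemma wpow_nth: "i < p * length W \<Longrightarrow> wpow W p ! i = W ! (i mod length W)"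
proof (induction p arbitrary: i)
  case 0 then show ?case by simp
next
  case (Suc p)
  have "wpow W (Suc p) = W @ wpow W p" by (simp add: wpow_def)
  then show ?case using Suc
    by (auto simp: nth_append le_mod_geq not_less)
qed

lemma Fword_len[simp]: "length (Fword l m n) = n"
  by (simp add: Fword_def)

lemma Fword_nth: "i < n \<Longrightarrow> Fword l m n ! i = (if int ((i*m) mod n) < l then L else R)"
  by (simp add: Fword_def)

lemma flip_len[simp]: "length (flip_at S j) = length S"
  by (simp add: flip_at_def)

lemma flip_nth: "i < length S \<Longrightarrow> flip_at S j ! i = (if i = j mod length S then flipLR (S ! i) else S ! i)"
  by (simp add: flip_at_def)

lemma keyP:
  fixes M N n m i :: nat
  assumes "M*n = N*m + 1" "i < N" "0 < n"
  shows "n * ((i*M) mod N) = N*((i*m) mod n) + i"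
proof -
  have e1: "i*M*n = N*(i*m) + i"
  proof -
    have "i*M*n = i*(N*m+1)" using assms(1) by (simp add: mult.assoc)
    then show ?thesis by (simp add: algebra_simps)
  qed
  have "N*(i*m) = N*(n*((i*m) div n)) + N*((i*m) mod n)"
    by (simp add: distrib_left[symmetric])
  then have "i*M*n = N*n*((i*m) div n) + (N*((i*m) mod n) + i)"
    using e1 by (simp add: mult.assoc)
  moreover have "N*((i*m) mod n) + i < N*n"
  proof -
    have "(i*m) mod n + 1 \<le> n" using assms(3) by (simp add: Suc_leI)
    then have "N*((i*m) mod n) + N \<le> N*n" by (metis add_mult_distrib2 mult_le_mono2 nat_mult_1_right)
    then show ?thesis using assms(2) by linarith
  qed
  ultimately have "(i*M*n) mod (N*n) = N*((i*m) mod n) + i"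
    by (simp add: mult.commute)
  moreover have "(i*M*n) mod (N*n) = ((i*M) mod N) * n" by (simp add: mod_mult_mult2)
  ultimately show ?thesis by (simp add: mult.commute)
qed

locale fsetup =
  fixes l m n nm np mm mp :: nat
  assumes l0: "0<l" and ln: "l<n" and m0: "0<m" and mn: "m<n"
    and nm1: "1 \<le> nm" and np1: "1 \<le> np" and msum: "mm+mp = m" and nsum: "nm+np = n"
    and relp: "m*np + 1 = mp*n" and relm: "m*nm = mm*n + 1"
begin

definition c where "c = (l*nm) mod n"
definition lm where "lm = (l*nm) div n"

lemma n2: "2 \<le> n" using l0 ln by linarith

lemma npos: "0 < n" using n2 by linarith

lemma c_lt: "c < n" unfolding c_def using npos by simp

lemma relm_int: "int m * int nm = int mm * int n + 1"
  using relm by (metis of_nat_1 of_nat_add of_nat_mult)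

lemma inv_int: "(x * int m * int nm) mod int n = x mod int n"
proof -
  have "x * int m * int nm = x * (int m * int nm)" by (simp add: mult.assoc)
  also have "\<dots> = x * (int mm * int n + 1)" using relm_int by simp
  also have "\<dots> = x + (x * int mm) * int n" by (simp add: algebra_simps)
  finally have "x * int m * int nm = x + (x * int mm) * int n" .
  then show ?thesis by simp
qed

lemma c_int: "int c = (int l * int nm) mod int n"
  unfolding c_def by (simp add: zmod_int)

lemma res_l: "(x * int m) mod int n = int l \<longleftrightarrow> x mod int n = int c"
proof
  assume h: "(x * int m) mod int n = int l"
  have "x mod int n = (x * int m * int nm) mod int n" using inv_int by simp
  also have "\<dots> = (((x * int m) mod int n) * int nm) mod int n" by (simp add: mod_mult_left_eq)
  also have "\<dots> = int c" using h c_int by simp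
  finally show "x mod int n = int c" .
next
  assume h: "x mod int n = int c"
  have "(x * int m) mod int n = ((x mod int n) * int m) mod int n" by (simp add: mod_mult_left_eq)
  also have "\<dots> = (((int l * int nm) mod int n) * int m) mod int n" using h c_int by simp
  also have "\<dots> = (int l * int nm * int m) mod int n" by (simp add: mod_mult_left_eq)
  also have "\<dots> = (int l * int m * int nm) mod int n" by (simp add: ac_simps)
  also have "\<dots> = int l mod int n" using inv_int by simp
  also have "\<dots> = int l" using ln by simp
  finally show "(x * int m) mod int n = int l" .
qed

lemma res_0: "(x * int m) mod int n = 0 \<longleftrightarrow> x mod int n = 0"
proof
  assume h: "(x * int m) mod int n = 0"
  have "x mod int n = (x * int m * int nm) mod int n" using inv_int by simp
  also have "\<dots> = (((x * int m) mod int n) * int nm) mod int n" by (simp add: mod_mult_left_eq)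
  also have "\<dots> = 0" using h by simp
  finally show "x mod int n = 0" .
next
  assume h: "x mod int n = 0"
  have "(x * int m) mod int n = ((x mod int n) * int m) mod int n" by (simp add: mod_mult_left_eq)
  then show "(x * int m) mod int n = 0" using h by simp
qed

lemma c_pos: "0 < c"
proof (rule ccontr)
  assume "\<not> 0 < c"
  then have "c = 0" by simp
  then show False using res_l[of 0] l0 by simp
qed

lemma S_nth: "j < n \<Longrightarrow> Fword (int l) m n ! j = (if (int j * int m) mod int n < int l then L else R)"
  by (simp add: Fword_nth zmod_int)

lemma Sld_nth: "j < n \<Longrightarrow> flip_at (Fword (int l) m n) (l*nm) ! j =
   (if (int j * int m) mod int n < int l \<or> int j = int c then L else R)"
proof -
  assume j: "j < n"
  have "(l*nm) mod n = c" by (simp add: c_def)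
  moreover have "(int c * int m) mod int n = int l" using res_l c_lt by simp
  moreover have "flip_at (Fword (int l) m n) (l*nm) ! j = (if j = (l*nm) mod n then flipLR (Fword (int l) m n ! j) else Fword (int l) m n ! j)"
    using j by (simp add: flip_nth)
  ultimately show ?thesis using j c_lt l0 by (cases "j = c") (simp_all add: S_nth)
qed

end



context fsetup begin

lemma Gp_nonneg:
  assumes "0 \<le> \<chi>" "\<chi> < int k"
  shows "Fword (int (k*l) + (int l - int lm) + \<chi>) (k*m+mp) (k*n+np) =
    wpow (flip_at (Fword (int l) m n) (l*nm)) (nat \<chi>) @ wpow (Fword (int l) m n) (nat (int k - \<chi>)) @ take np (Fword (int l) m n)"
proof -
  obtain x where x: "\<chi> = int x" "x < k" using assms by (metis nonneg_int_cases of_nat_less_iff)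
  define N where "N = k*n+np"
  define M where "M = k*m+mp"
  define lam where "lam = int (k*l) + (int l - int lm) + \<chi>"
  define S where "S = Fword (int l) m n"
  define Sld where "Sld = flip_at S (l*nm)"
  have nx: "nat \<chi> = x" "nat (int k - \<chi>) = k - x" using x by auto
  have MN: "M*n = N*m + 1"
  proof -
    have "M*n = k*m*n + mp*n" by (simp add: M_def algebra_simps)
    also have "\<dots> = k*m*n + m*np + 1" using relp by simp
    finally show ?thesis by (simp add: N_def algebra_simps)
  qed
  have npn: "np < n" using nsum nm1 by linarith
  have kx: "x*n + (k-x)*n = k*n" using x(2) by (metis add_mult_distrib le_add_diff_inverse less_imp_le_nat)
  have lenR: "length (wpow Sld x @ wpow S (k - x) @ take np S) = N"
  proof -
    show ?thesis using kx using npn by (simp add: Sld_def S_def N_def)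
  qed
  have h1: "int l * int nm = int lm * int n + int c"
    unfolding lm_def c_def by (metis of_nat_add of_nat_mult div_mult_mod_eq mult.commute)
  have h2: "int l * int nm + int l * int np = int l * int n"
    using nsum by (metis distrib_left of_nat_add)
  have lamn: "lam * int n = int N * int l + int c + int x * int n"
    unfolding lam_def N_def using h1 h2 x(1) by (simp add: algebra_simps)
  have cxN: "int c + int x * int n < int N"
  proof -
    have "int x * int n + int n \<le> int k * int n"
      using x(2) by (metis add.commute mult_Suc of_nat_add of_nat_le_iff of_nat_mult Suc_leI mult_le_mono1)
    then show ?thesis using c_lt unfolding N_def by simp
  qed
  show ?thesis
    unfolding nx S_def[symmetric] Sld_def[symmetric] lam_def[symmetric] N_def[symmetric] M_def[symmetric]
  proof (rule nth_equalityI)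
    show "length (Fword lam M N) = length (wpow Sld x @ wpow S (k - x) @ take np S)"
      using lenR by simp
    fix i assume "i < length (Fword lam M N)"
    then have iN: "i < N" by simp
    define r where "r = (i*m) mod n"
    have rn: "r < n" unfolding r_def using npos by simp
    have rint: "int r = (int i * int m) mod int n" unfolding r_def by (simp add: zmod_int)
    have key: "n * ((i*M) mod N) = N*r + i" unfolding r_def using keyP[OF MN iN npos] .
    have G: "Fword lam M N ! i = (if int ((i*M) mod N) < lam then L else R)"
      using iN by (simp add: Fword_nth)
    have GL: "int ((i*M) mod N) < lam \<longleftrightarrow> int N * int r + int i < int N * int l + int c + int x * int n"
    proof -
      have "int ((i*M) mod N) < lam \<longleftrightarrow> int n * int ((i*M) mod N) < int n * lam"
        using npos by simp
      also have "\<dots> \<longleftrightarrow> int N * int r + int i < int N * int l + int c + int x * int n"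
        using key lamn by (metis (no_types, lifting) mult.commute of_nat_add of_nat_mult)
      finally show ?thesis .
    qed
    have charG: "int N * int r + int i < int N * int l + int c + int x * int n \<longleftrightarrow> r < l \<or> (r = l \<and> i < c + x*n)"
    proof (cases "r < l")
      case True
      then have "int N * (int r + 1) \<le> int N * int l" by (simp add: mult_left_mono)
      then have a: "int N * int r + int N \<le> int N * int l" by (simp add: algebra_simps)
      have b: "0 \<le> int c + int x * int n" by simp
      have "int i < int N" using iN by simp
      then have "int N * int r + int i < int N * int l + int c + int x * int n" using a b by linarith
      then show ?thesis using True by simp
    next
      case False
      show ?thesis
      proof (cases "r = l")
        case True
        have "int c + int x * int n = int (c + x*n)" by simp
        have "int N * int r + int i < int N * int l + int c + int x * int n \<longleftrightarrow> int i < int (c + x*n)"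
          using True by simp
        also have "\<dots> \<longleftrightarrow> i < c + x*n" by (rule of_nat_less_iff)
        finally show ?thesis using True by simp
      next
        case False2: False
        then have "int N * (int l + 1) \<le> int N * int r" using False by (simp add: mult_left_mono)
        then have a: "int N * int l + int N \<le> int N * int r" by (simp add: algebra_simps)
        have "\<not> (int N * int r + int i < int N * int l + int c + int x * int n)" using a cxN by linarith
        then show ?thesis using False False2 by simp
      qed
    qed
    have Rn: "(wpow Sld x @ wpow S (k - x) @ take np S) ! i = (if i < x*n then Sld ! (i mod n) else S ! (i mod n))"
    proof -
      have lS: "length S = n" "length Sld = n" by (simp_all add: S_def Sld_def)
      show ?thesis
      proof (cases "i < x*n")
        case True then show ?thesis using lS by (simp add: nth_append wpow_nth)
      next
        case False
        show ?thesis
        proof (cases "i - x*n < (k-x)*n")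
          case True
          have "i mod n = ((i - x*n) + x*n) mod n" using False by simp
          then have "(i - x*n) mod n = i mod n" by simp
          then show ?thesis using True False lS by (simp add: nth_append wpow_nth)
        next
          case False2: False
          have "i - x*n - (k-x)*n = i - k*n" using kx by simp
          moreover have "i - k*n < np" using iN np1 unfolding N_def by linarith
          moreover have "(i - k*n) mod n = i mod n"
          proof -
            have "k*n \<le> i" using False False2 kx by linarith
            then have "i mod n = ((i - k*n) + k*n) mod n" by simp
            then show ?thesis by simp
          qed
          ultimately show ?thesis using False False2 lS npn by (simp add: nth_append wpow_nth)
        qed
      qed
    qed
    have imn: "i mod n < n" using npos by simp
    have rr: "(int (i mod n) * int m) mod int n = int r"
      using rint by (simp add: zmod_int mod_mult_left_eq)
    have rl: "r = l \<longleftrightarrow> i mod n = c"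
    proof -
      have "r = l \<longleftrightarrow> int r = int l" by simp
      also have "\<dots> \<longleftrightarrow> int i mod int n = int c" using res_l[of "int i"] rint by simp
      also have "\<dots> \<longleftrightarrow> i mod n = c" by (metis of_nat_eq_iff zmod_int)
      finally show ?thesis .
    qed
    have cx: "i mod n = c \<Longrightarrow> (i < x*n \<longleftrightarrow> i < c + x*n)"
    proof -
      assume h: "i mod n = c"
      have e: "i = (i div n)*n + c" using h by (metis div_mult_mod_eq)
      show ?thesis
      proof
        assume "i < x*n"
        then show "i < c + x*n" by linarith
      next
        assume a: "i < c + x*n"
        then have "(i div n)*n < x*n" using e by linarith
        then have "i div n < x" by simp
        then have "i div n + 1 \<le> x" by simp
        then have "(i div n + 1)*n \<le> x*n" by (rule mult_right_mono) simp
        then show "i < x*n" using e c_lt by (simp add: algebra_simps)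
      qed
    qed
    have GV: "Fword lam M N ! i = (if r < l \<or> (r = l \<and> i < c + x*n) then L else R)"
      using G GL charG by simp
    show "Fword lam M N ! i = (wpow Sld x @ wpow S (k - x) @ take np S) ! i"
    proof (cases "i < x*n")
      case True
      have "(wpow Sld x @ wpow S (k - x) @ take np S) ! i = (if int r < int l \<or> i mod n = c then L else R)"
        using Rn True Sld_nth[OF imn] rr unfolding Sld_def S_def by simp
      then show ?thesis using GV True rl cx by auto
    next
      case False
      have "(wpow Sld x @ wpow S (k - x) @ take np S) ! i = (if int r < int l then L else R)"
        using Rn False S_nth[OF imn] rr unfolding S_def by simp
      then show ?thesis using GV False rl cx by auto
    qed
  qed
qed

end


context fsetup begin

lemma S0_nth: "t < n \<Longrightarrow> flip_at (Fword (int l) m n) 0 ! t =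
   (if t \<noteq> 0 \<and> (int t * int m) mod int n < int l then L else R)"
  using l0 by (auto simp: flip_nth S_nth)

lemma Gp_neg:
  assumes "\<chi> < 0" "- \<chi> < int k"
  shows "Fword (int (k*l) + (int l - int lm) + \<chi>) (k*m+mp) (k*n+np) =
    wpow (Fword (int l) m n) (nat (int k + \<chi>)) @ take np (Fword (int l) m n) @ wpow (flip_at (Fword (int l) m n) 0) (nat (- \<chi>))"
proof -
  define a where "a = nat (- \<chi>)"
  have a: "\<chi> = - int a" "1 \<le> a" "a < k" using assms unfolding a_def by auto
  define N where "N = k*n+np"
  define M where "M = k*m+mp"
  define lam where "lam = int (k*l) + (int l - int lm) + \<chi>"
  define S where "S = Fword (int l) m n"
  define S0 where "S0 = flip_at S 0"
  define A where "A = (k-a)*n + np"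
  have nx: "nat (int k + \<chi>) = k - a" "nat (- \<chi>) = a" using a by auto
  have MN: "M*n = N*m + 1"
  proof -
    have "M*n = k*m*n + mp*n" by (simp add: M_def algebra_simps)
    also have "\<dots> = k*m*n + m*np + 1" using relp by simp
    finally show ?thesis by (simp add: N_def algebra_simps)
  qed
  have npn: "np < n" using nsum nm1 by linarith
  have ka: "(k-a)*n + a*n = k*n" using a(3) by (metis add_mult_distrib le_add_diff_inverse2 less_imp_le_nat)
  have AN: "A + a*n = N" unfolding A_def N_def using ka by simp
  have lenR: "length (wpow S (k-a) @ take np S @ wpow S0 a) = N"
    using AN npn by (simp add: S0_def S_def A_def)
  have h1: "int l * int nm = int lm * int n + int c"
    unfolding lm_def c_def by (metis of_nat_add of_nat_mult div_mult_mod_eq mult.commute)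
  have h2: "int l * int nm + int l * int np = int l * int n"
    using nsum by (metis distrib_left of_nat_add)
  have lamn: "lam * int n = int N * int l + int c - int a * int n"
    unfolding lam_def N_def using h1 h2 a(1) by (simp add: algebra_simps)
  have anN: "int a * int n + int n \<le> int k * int n"
    using a(3) by (metis add.commute mult_Suc of_nat_add of_nat_le_iff of_nat_mult Suc_leI mult_le_mono1)
  have anN': "int a * int n < int N" using anN npos unfolding N_def by simp
  have can: "int c < int a * int n"
  proof -
    have "1 * int n \<le> int a * int n" using a(2) by (intro mult_right_mono) simp_all
    then show ?thesis using c_lt by linarith
  qed
  have relpi: "int np * int m + 1 = int mp * int n" using relp by (metis mult.commute of_nat_1 of_nat_add of_nat_mult)
  have Am: "int A * int m = int n * (int (k-a) * int m + int mp) - 1"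
  proof -
    define q where "q = k - a"
    have "int A = int q * int n + int np" unfolding A_def q_def by simp
    then have "int A * int m = int n * (int q * int m + int mp) - 1" using relpi by (simp add: algebra_simps)
    then show ?thesis unfolding q_def .
  qed
  show ?thesis
    unfolding nx S_def[symmetric] S0_def[symmetric] lam_def[symmetric] N_def[symmetric] M_def[symmetric]
  proof (rule nth_equalityI)
    show "length (Fword lam M N) = length (wpow S (k-a) @ take np S @ wpow S0 a)"
      using lenR by simp
    fix i assume "i < length (Fword lam M N)"
    then have iN: "i < N" by simp
    define r where "r = (i*m) mod n"
    have rn: "r < n" unfolding r_def using npos by simp
    have rint: "int r = (int i * int m) mod int n" unfolding r_def by (simp add: zmod_int)
    have key: "n * ((i*M) mod N) = N*r + i" unfolding r_def using keyP[OF MN iN npos] .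
    have G: "Fword lam M N ! i = (if int ((i*M) mod N) < lam then L else R)"
      using iN by (simp add: Fword_nth)
    have GL: "int ((i*M) mod N) < lam \<longleftrightarrow> int N * int r + int i < int N * int l + int c - int a * int n"
    proof -
      have "int ((i*M) mod N) < lam \<longleftrightarrow> int n * int ((i*M) mod N) < int n * lam"
        using npos by simp
      also have "\<dots> \<longleftrightarrow> int N * int r + int i < int N * int l + int c - int a * int n"
        using key lamn by (metis (no_types, lifting) mult.commute of_nat_add of_nat_mult)
      finally show ?thesis .
    qed
    have charG: "int N * int r + int i < int N * int l + int c - int a * int n \<longleftrightarrow> r + 1 < l \<or> (r + 1 = l \<and> i < A + c)"
    proof (cases "r + 1 < l")
      case True
      then have "int N * (int r + 2) \<le> int N * int l" by (simp add: mult_left_mono)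
      then have x: "int N * int r + 2 * int N \<le> int N * int l" by (simp add: algebra_simps)
      have "int i < int N" using iN by simp
      then have "int N * int r + int i < int N * int l + int c - int a * int n" using x anN' by linarith
      then show ?thesis using True by simp
    next
      case False
      show ?thesis
      proof (cases "r + 1 = l")
        case True
        then have x: "int N * int l = int N * int r + int N" by (simp add: algebra_simps flip: True)
        have AN': "int A + int a * int n = int N" using AN by (metis of_nat_add of_nat_mult)
        have "int N * int r + int i < int N * int l + int c - int a * int n \<longleftrightarrow> int i < int (A + c)"
          using x AN' by (simp only: of_nat_add) (intro iffI; linarith)
        also have "\<dots> \<longleftrightarrow> i < A + c" by (rule of_nat_less_iff)
        finally show ?thesis using True by simp
      next
        case False2: False
        then have "int N * int l \<le> int N * int r" using False by (simp add: mult_left_mono)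
        then have "\<not> (int N * int r + int i < int N * int l + int c - int a * int n)" using can by linarith
        then show ?thesis using False False2 by simp
      qed
    qed
    have GV: "Fword lam M N ! i = (if r + 1 < l \<or> (r + 1 = l \<and> i < A + c) then L else R)"
      using G GL charG by simp
    have lS: "length S = n" "length S0 = n" by (simp_all add: S_def S0_def)
    show "Fword lam M N ! i = (wpow S (k-a) @ take np S @ wpow S0 a) ! i"
    proof (cases "i < A")
      case True
      have Rn: "(wpow S (k-a) @ take np S @ wpow S0 a) ! i = S ! (i mod n)"
      proof (cases "i < (k-a)*n")
        case True then show ?thesis using lS by (simp add: nth_append wpow_nth)
      next
        case False
        have "i - (k-a)*n < np" using \<open>i < A\<close> False unfolding A_def by linarith
        moreover have "(i - (k-a)*n) mod n = i mod n"
        proof -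
          have "i mod n = ((i - (k-a)*n) + (k-a)*n) mod n" using False by simp
          then show ?thesis by simp
        qed
        moreover have "i - (k-a)*n = (i - (k-a)*n) mod n" using calculation npn by simp
        ultimately show ?thesis using False lS npn by (simp add: nth_append wpow_nth)
      qed
      have imn: "i mod n < n" using npos by simp
      have rr: "(int (i mod n) * int m) mod int n = int r"
        using rint by (simp add: zmod_int mod_mult_left_eq)
      have "(wpow S (k-a) @ take np S @ wpow S0 a) ! i = (if int r < int l then L else R)"
        using Rn S_nth[OF imn] rr unfolding S_def by simp
      then show ?thesis using GV True by auto
    next
      case False
      define j where "j = i - A"
      have jA: "i = A + j" using False unfolding j_def by simp
      have jn: "j < a*n" using iN AN jA by linarith
      have jm: "(int j * int m) mod int n = (int r + 1) mod int n"
      proof -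
        have "int j * int m = (int i * int m + 1) + int n * (- (int (k-a) * int m + int mp))"
          using jA Am by (simp add: algebra_simps)
        then have "(int j * int m) mod int n = (int i * int m + 1) mod int n"
          by (metis mod_mult_self2)
        also have "\<dots> = (int r + 1) mod int n" using rint by (simp add: mod_add_left_eq)
        finally show ?thesis .
      qed
      have f1: "\<not> i < (k-a)*n" "\<not> i - (k-a)*n < np" "i - (k-a)*n - np = j"
        using False unfolding j_def A_def by auto
      have Rn: "(wpow S (k-a) @ take np S @ wpow S0 a) ! i = S0 ! (j mod n)"
        using f1 jn lS npn by (simp add: nth_append wpow_nth)
      have jmn: "j mod n < n" using npos by simp
      have tm: "(int (j mod n) * int m) mod int n = (int r + 1) mod int n"
        using jm by (simp add: zmod_int mod_mult_left_eq)
      have S0v: "S0 ! (j mod n) = (if r + 1 < l then L else R)"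
      proof (cases "r + 1 < n")
        case True
        then have rr1: "(int r + 1) mod int n = int r + 1" by simp
        show ?thesis
        proof (cases "r + 1 < l")
          case True2: True
          have "j mod n \<noteq> 0"
          proof
            assume "j mod n = 0"
            then have "(int (j mod n) * int m) mod int n = 0" by simp
            then show False using tm rr1 by simp
          qed
          then show ?thesis using S0_nth[OF jmn] tm rr1 True2 unfolding S0_def S_def by simp
        next
          case False2: False
          then show ?thesis using S0_nth[OF jmn] tm rr1 unfolding S0_def S_def by simp
        qed
      next
        case False
        then have "int r + 1 = int n" using rn by simp
        then have "(int (j mod n) * int m) mod int n = 0" using tm by simp
        then have "int (j mod n) mod int n = 0" using res_0[of "int (j mod n)"] by simp
        then have "j mod n = 0" using jmn by simp
        then show ?thesis using S0_nth[OF jmn] False ln unfolding S0_def S_def by simp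
      qed
      have notc: "\<not> (r + 1 = l \<and> i < A + c)"
      proof
        assume h: "r + 1 = l \<and> i < A + c"
        then have "(int j * int m) mod int n = int l" using jm ln by simp
        then have "int j mod int n = int c" using res_l[of "int j"] by simp
        then have "j mod n = c" by (metis of_nat_eq_iff zmod_int)
        moreover have "j < c" using h jA by simp
        ultimately show False using mod_less_eq_dividend[of j n] by linarith
      qed
      show ?thesis using GV Rn S0v notc by auto
    qed
  qed
qed

end


lemma keyM:
  fixes M N n m i :: nat
  assumes "M*n + 1 = N*m" "0 < i" "i < N" "0 < n" "0 < m"
  shows "n * ((i*M) mod N) + i = N*((i*m - 1) mod n + 1)"
proof -
  define v where "v = (i*M) mod N"
  define w where "w = (i*M) div N"
  define q where "q = (i*m - 1) div n"
  define s where "s = (i*m - 1) mod n + 1"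
  have im1: "1 \<le> i*m" using assms(2,5) by (simp add: Suc_leI)
  have ims: "i*m = n*q + s" unfolding q_def s_def using im1 by (metis add.assoc div_mult_mod_eq le_add_diff_inverse2 mult.commute)
  have iMw: "i*M = N*w + v" unfolding v_def w_def by simp
  have e: "i*M*n + i = N*(i*m)"
  proof -
    have "i*M*n + i = i*(M*n + 1)" by (simp add: algebra_simps)
    also have "\<dots> = i*(N*m)" using assms(1) by simp
    finally show ?thesis by (simp add: algebra_simps)
  qed
  have E: "int N * int n * (int w - int q) = int N * int s - int n * int v - int i"
  proof -
    have "(N*w + v)*n + i = N*(n*q + s)" using e iMw ims by simp
    then have "int ((N*w + v)*n + i) = int (N*(n*q + s))" by simp
    then show ?thesis by (simp add: algebra_simps)
  qed
  have vN: "v < N" unfolding v_def using assms(3) by simp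
  have s1: "1 \<le> s" "s \<le> n" unfolding s_def using assms(4) by (auto simp: Suc_leI)
  have b1: "int n * int v \<le> int n * int N - int n"
  proof -
    have "int n * (int v + 1) \<le> int n * int N" using vN by (intro mult_left_mono) auto
    then show ?thesis by (simp add: algebra_simps)
  qed
  have b2: "int N * 1 \<le> int N * int s" using s1 by (intro mult_left_mono) auto
  have b3: "int N * int s \<le> int N * int n" using s1 by (intro mult_left_mono) auto
  have wq: "int w = int q"
  proof (rule ccontr)
    assume "int w \<noteq> int q"
    then consider "int w - int q \<ge> 1" | "int w - int q \<le> -1" by linarith
    then show False
    proof cases
      case 1
      then have "int N * int n * 1 \<le> int N * int n * (int w - int q)" by (intro mult_left_mono) auto
      moreover have "0 \<le> int n * int v" by simp
      moreover have "0 < int i" using assms(2) by simp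
      ultimately show False using E b3 by linarith
    next
      case 2
      then have "int N * int n * (int w - int q) \<le> int N * int n * (-1)" by (intro mult_left_mono) auto
      moreover have "int n * int N - int n + int i < int n * int N + int N" using assms(3) by simp
      moreover have "int N * int n * (-1) = - (int n * int N)" by simp
      moreover have "int i < int N" using assms(3) by simp
      ultimately show False using E b1 b2 by linarith
    qed
  qed
  then have "int N * int s = int n * int v + int i" using E by simp
  then have "N*s = n*v + i" by (metis of_nat_add of_nat_eq_iff of_nat_mult)
  then show ?thesis unfolding v_def s_def by simp
qed

lemma modpos_int:
  fixes j a c n :: int
  assumes "j mod n = c" "0 \<le> c" "c < n" "0 < n"
  shows "c + a*n < j \<longleftrightarrow> (1+a)*n \<le> j"
proof -
  define q where "q = j div n"
  have j: "j = n*q + c" unfolding q_def using assms(1) by (metis div_mult_mod_eq mult.commute)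
  show ?thesis
  proof (cases "a < q")
    case True
    then have "n*(a+1) \<le> n*q" using assms(4) by (intro mult_left_mono) auto
    then have "n*a + n \<le> n*q" by (simp add: algebra_simps)
    moreover have "a*n = n*a" "(1+a)*n = n*a + n" by (simp_all add: algebra_simps)
    ultimately show ?thesis using j assms(2,4) by (smt (verit))
  next
    case False
    then have "n*q \<le> n*a" using assms(4) by (intro mult_left_mono) auto
    moreover have "a*n = n*a" "(1+a)*n = n*a + n" by (simp_all add: algebra_simps)
    ultimately show ?thesis using j assms(3,4) by (smt (verit))
  qed
qed

context fsetup begin

lemma sv_fact: assumes "0 < i"
  shows "int ((i*m - 1) mod n + 1) = (int i * int m - 1) mod int n + 1"
proof -
  have "1 \<le> i*m" using assms m0 by (simp add: Suc_leI)
  then have "int (i*m - 1) = int i * int m - 1" by (simp add: of_nat_diff)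
  then show ?thesis by (simp add: zmod_int)
qed

lemma shift: assumes "int n dvd (int t - int i - int np)"
  shows "(int t * int m) mod int n = (int i * int m - 1) mod int n"
proof -
  obtain w where w: "int t - int i - int np = int n * w" using assms by (auto simp: dvd_def)
  have relpi: "int np * int m + 1 = int mp * int n" using relp by (metis mult.commute of_nat_1 of_nat_add of_nat_mult)
  have "int t * int m = (int i + int np + int n * w) * int m" using w by (simp add: algebra_simps)
  also have "\<dots> = (int i * int m - 1) + int n * (int mp + w * int m)" using relpi by (simp add: algebra_simps)
  finally show ?thesis by (metis mod_mult_self2)
qed

lemma low: assumes "0 < i"
  shows "(i mod n \<noteq> 0 \<and> (int i * int m) mod int n < int l) \<longleftrightarrow> (int i * int m - 1) mod int n + 1 < int l"
proof -
  define sv where "sv = (int i * int m - 1) mod int n"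
  have sv: "0 \<le> sv" "sv < int n" unfolding sv_def using npos by auto
  have rim: "(int i * int m) mod int n = (sv + 1) mod int n"
    unfolding sv_def by (metis diff_add_cancel mod_add_left_eq)
  show ?thesis
  proof (cases "sv + 1 = int n")
    case True
    then have "(int i * int m) mod int n = 0" using rim by simp
    then have "int i mod int n = 0" using res_0[of "int i"] by simp
    then have "i mod n = 0" by (metis of_nat_0 of_nat_eq_iff zmod_int)
    then show ?thesis using True ln unfolding sv_def by simp
  next
    case False
    then have "sv + 1 < int n" using sv by simp
    then have r: "(int i * int m) mod int n = sv + 1" using rim sv by simp
    then have "int i mod int n \<noteq> 0" using res_0[of "int i"] sv by simp
    then have "i mod n \<noteq> 0" by (metis of_nat_0 zmod_int)
    then show ?thesis using r unfolding sv_def by simp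
  qed
qed

end



context fsetup begin

lemma Gm_nonpos:
  assumes "\<chi> \<le> 0" "- \<chi> < int k"
  shows "Fword (int (k*l) + int lm + \<chi>) (k*m+mm) (k*n+nm) =
    Fword (int l) m n @ wpow (flip_at (Fword (int l) m n) 0) (nat (- \<chi>)) @ drop np (Fword (int l) m n)
      @ wpow (Fword (int l) m n) (nat (int k + \<chi> - 1))"
proof -
  define a where "a = nat (- \<chi>)"
  have a: "\<chi> = - int a" "a < k" using assms unfolding a_def by auto
  define N where "N = k*n+nm"
  define M where "M = k*m+mm"
  define lam where "lam = int (k*l) + int lm + \<chi>"
  define S where "S = Fword (int l) m n"
  define S0 where "S0 = flip_at S 0"
  define B where "B = n + a*n"
  have nx: "nat (- \<chi>) = a" "nat (int k + \<chi> - 1) = k - a - 1" using a by auto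
  have MN: "M*n + 1 = N*m"
  proof -
    have "M*n + 1 = k*m*n + (mm*n + 1)" by (simp add: M_def algebra_simps)
    also have "\<dots> = k*m*n + m*nm" using relm by simp
    finally show ?thesis by (simp add: N_def algebra_simps)
  qed
  have npn: "np < n" "nm < n" using nsum nm1 np1 by linarith+
  have ka: "B + (k-a-1)*n = k*n"
  proof -
    define q where "q = k - a - 1"
    have q: "1 + a + q = k" using a(2) unfolding q_def by simp
    have "B + q*n = (1 + a + q)*n" unfolding B_def by (simp add: algebra_simps)
    then show ?thesis using q unfolding q_def by simp
  qed
  have lS: "length S = n" "length S0 = n" by (simp_all add: S_def S0_def)
  have lenR: "length (S @ wpow S0 a @ drop np S @ wpow S (k-a-1)) = N"
  proof -
    have "n + a*n + nm + (k-a-1)*n = N" using ka nsum unfolding B_def N_def by simp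
    then show ?thesis using lS nsum by simp
  qed
  have h1: "int l * int nm = int lm * int n + int c"
    unfolding lm_def c_def by (metis of_nat_add of_nat_mult div_mult_mod_eq mult.commute)
  have lamn: "lam * int n = int N * int l - int c - int a * int n"
    unfolding lam_def N_def using h1 a(1) by (simp add: algebra_simps)
  have cxN: "int c + int a * int n < int N"
  proof -
    have "int a * int n + int n \<le> int k * int n"
      using a(2) by (metis add.commute mult_Suc of_nat_add of_nat_le_iff of_nat_mult Suc_leI mult_le_mono1)
    then show ?thesis using c_lt unfolding N_def by simp
  qed
  have lampos: "0 < lam"
  proof -
    have "int k * 1 \<le> int k * int l" using l0 by (intro mult_left_mono) auto
    moreover have "0 \<le> int lm" by simp
    moreover have "int a < int k" using a(2) by simp
    moreover have "lam = int k * int l + int lm - int a" unfolding lam_def using a(1) by simp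
    ultimately show ?thesis by linarith
  qed
  show ?thesis
    unfolding nx S_def[symmetric] S0_def[symmetric] lam_def[symmetric] N_def[symmetric] M_def[symmetric]
  proof (rule nth_equalityI)
    show "length (Fword lam M N) = length (S @ wpow S0 a @ drop np S @ wpow S (k-a-1))"
      using lenR by simp
    fix i assume "i < length (Fword lam M N)"
    then have iN: "i < N" by simp
    have G: "Fword lam M N ! i = (if int ((i*M) mod N) < lam then L else R)"
      using iN by (simp add: Fword_nth)
    show "Fword lam M N ! i = (S @ wpow S0 a @ drop np S @ wpow S (k-a-1)) ! i"
    proof (cases "i = 0")
      case True
      then show ?thesis using G lampos l0 npos lS by (simp add: nth_append S_def Fword_nth)
    next
      case False
      then have i0: "0 < i" by simp
      define sv where "sv = (int i * int m - 1) mod int n"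
      have sv: "0 \<le> sv" "sv < int n" unfolding sv_def using npos by auto
      have key: "n * ((i*M) mod N) + i = N*((i*m - 1) mod n + 1)" using keyM[OF MN i0 iN npos m0] .
      have key2: "int n * int ((i*M) mod N) = int N * (sv + 1) - int i"
      proof -
        have "int (n * ((i*M) mod N) + i) = int (N*((i*m - 1) mod n + 1))" using key by simp
        then show ?thesis using sv_fact[OF i0] unfolding sv_def by (simp add: algebra_simps)
      qed
      have GL: "int ((i*M) mod N) < lam \<longleftrightarrow> int N * (sv + 1) - int i < int N * int l - int c - int a * int n"
      proof -
        have "int ((i*M) mod N) < lam \<longleftrightarrow> int n * int ((i*M) mod N) < int n * lam"
          using npos by simp
        then show ?thesis using key2 lamn by (simp add: mult.commute)
      qed
      have charG: "int N * (sv + 1) - int i < int N * int l - int c - int a * int n \<longleftrightarrow>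
          sv + 1 < int l \<or> (sv + 1 = int l \<and> int c + int a * int n < int i)"
      proof (cases "sv + 1 < int l")
        case True
        then have "int N * (sv + 1 + 1) \<le> int N * int l" by (intro mult_left_mono) auto
        then have x: "int N * (sv + 1) + int N \<le> int N * int l" by (simp add: algebra_simps)
        have "int N * (sv + 1) - int i < int N * int l - int c - int a * int n" using x cxN by simp
        then show ?thesis using True by simp
      next
        case False
        show ?thesis
        proof (cases "sv + 1 = int l")
          case True
          then show ?thesis by auto
        next
          case False2: False
          then have "int N * (int l + 1) \<le> int N * (sv + 1)" using False by (intro mult_left_mono) auto
          then have x: "int N * int l + int N \<le> int N * (sv + 1)" by (simp add: algebra_simps)
          have "int i < int N" using iN by simp
          moreover have "0 \<le> int c + int a * int n" by simp
          ultimately have "\<not> (int N * (sv + 1) - int i < int N * int l - int c - int a * int n)" using x by linarith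
          then show ?thesis using False False2 by simp
        qed
      qed
      have GV: "Fword lam M N ! i = (if sv + 1 < int l \<or> (sv + 1 = int l \<and> int c + int a * int n < int i) then L else R)"
        using G GL charG by simp
      have posl: "sv + 1 = int l \<Longrightarrow> (int c + int a * int n < int i \<longleftrightarrow> (1 + int a) * int n \<le> int i)"
      proof -
        assume h: "sv + 1 = int l"
        have "(int i * int m) mod int n = (sv + 1) mod int n"
          unfolding sv_def by (metis diff_add_cancel mod_add_left_eq)
        then have "(int i * int m) mod int n = int l" using h ln by simp
        then have "int i mod int n = int c" using res_l[of "int i"] by simp
        then show ?thesis using modpos_int[of "int i" "int n" "int c" "int a"] c_lt npos by simp
      qed
      show ?thesis
      proof (cases "i < B")
        case True
        have RL: "(S @ wpow S0 a @ drop np S @ wpow S (k-a-1)) ! i = L \<longleftrightarrow> (i mod n \<noteq> 0 \<and> (int i * int m) mod int n < int l)"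
        proof (cases "i < n")
          case True
          then have "(S @ wpow S0 a @ drop np S @ wpow S (k-a-1)) ! i = S ! i" using lS by (simp add: nth_append)
          then show ?thesis using True i0 unfolding S_def by (simp add: S_nth)
        next
          case False
          moreover have "i - n < a*n" using \<open>i < B\<close> False unfolding B_def by linarith
          ultimately have "(S @ wpow S0 a @ drop np S @ wpow S (k-a-1)) ! i = S0 ! ((i - n) mod n)"
            using lS by (simp add: nth_append wpow_nth)
          moreover have "(i - n) mod n = i mod n" using False by (simp add: le_mod_geq)
          moreover have "i mod n < n" using npos by simp
          moreover have "(int (i mod n) * int m) mod int n = (int i * int m) mod int n"
            by (simp add: zmod_int mod_mult_left_eq)
          ultimately show ?thesis unfolding S0_def S_def using S0_nth by simp
        qed
        have "int B = (1 + int a) * int n" unfolding B_def by (simp add: algebra_simps)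
        moreover have "int i < int B" using True by simp
        ultimately have "\<not> (1 + int a) * int n \<le> int i" by linarith
        then show ?thesis using RL GV posl low[OF i0] unfolding sv_def
          by (cases "(S @ wpow S0 a @ drop np S @ wpow S (k-a-1)) ! i") auto
      next
        case False
        have "\<exists>t<n. (S @ wpow S0 a @ drop np S @ wpow S (k-a-1)) ! i = S ! t \<and> int n dvd (int t - int i - int np)"
        proof (cases "i < B + nm")
          case True
          have f: "\<not> i < n" "\<not> i - n < a*n" "i - n - a*n < nm" "i - n - a*n = i - B"
            using True False unfolding B_def by auto
          have ld: "length (drop np S) = nm" using lS nsum by simp
          have "(S @ wpow S0 a @ drop np S @ wpow S (k-a-1)) ! i = drop np S ! (i - B)"
            using f ld lS by (simp add: nth_append)
          also have "\<dots> = S ! (np + (i - B))" using f lS nsum by simp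
          finally have "(S @ wpow S0 a @ drop np S @ wpow S (k-a-1)) ! i = S ! (np + (i - B))" .
          moreover have "np + (i - B) < n" using True False nsum by linarith
          moreover have "int (np + (i - B)) - int i - int np = int n * (- (1 + int a))"
            using False unfolding B_def by (simp add: algebra_simps of_nat_diff)
          ultimately show ?thesis by (metis dvd_triv_left)
        next
          case False2: False
          have "i - B - nm < (k-a-1)*n" using iN False2 ka unfolding N_def by linarith
          moreover have f: "\<not> i < n" "\<not> i - n < a*n" "\<not> i - n - a*n < nm" "i - n - a*n - nm = i - B - nm"
            using False False2 unfolding B_def by auto
          moreover have ld: "length (drop np S) = nm" using lS nsum by simp
          ultimately have "(S @ wpow S0 a @ drop np S @ wpow S (k-a-1)) ! i = S ! ((i - B - nm) mod n)"
            using lS by (simp add: nth_append wpow_nth del: length_drop)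
          moreover have "(i - B - nm) mod n < n" using npos by simp
          moreover have "int ((i - B - nm) mod n) - int i - int np = int n * (- ((int i - int B - int nm) div int n) - 1 - int a - 1)"
          proof -
            have "int ((i - B - nm) mod n) = (int i - int B - int nm) mod int n"
              using False2 by (simp add: zmod_int of_nat_diff algebra_simps)
            also have "\<dots> = (int i - int B - int nm) - int n * ((int i - int B - int nm) div int n)"
              by (simp add: minus_div_mult_eq_mod[symmetric] algebra_simps)
            finally show ?thesis using nsum unfolding B_def by (simp add: algebra_simps)
          qed
          ultimately show ?thesis by (metis dvd_triv_left)
        qed
        then obtain t where t: "t < n" "(S @ wpow S0 a @ drop np S @ wpow S (k-a-1)) ! i = S ! t"
          "int n dvd (int t - int i - int np)" by blast
        have tm: "(int t * int m) mod int n = sv" using shift[OF t(3)] unfolding sv_def .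
        have RV: "(S @ wpow S0 a @ drop np S @ wpow S (k-a-1)) ! i = (if sv < int l then L else R)"
          using t(2) S_nth[OF t(1)] tm unfolding S_def by simp
        have "int B = (1 + int a) * int n" unfolding B_def by (simp add: algebra_simps)
        moreover have "int B \<le> int i" using False by simp
        ultimately have "(1 + int a) * int n \<le> int i" by linarith
        then show ?thesis using RV GV posl by auto
      qed
    qed
  qed
qed

end


context fsetup begin

lemma Gm_pos:
  assumes "0 < \<chi>" "\<chi> < int k"
  shows "Fword (int (k*l) + int lm + \<chi>) (k*m+mm) (k*n+nm) =
    flip_at (Fword (int l) m n) (l*nm) @ drop np (Fword (int l) m n) @ wpow (Fword (int l) m n) (nat (int k - \<chi>))
      @ wpow (flip_at (Fword (int l) m n) (l*nm)) (nat (\<chi> - 1))"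
proof -
  define x where "x = nat \<chi>"
  have x: "\<chi> = int x" "1 \<le> x" "x < k" using assms unfolding x_def by auto
  define N where "N = k*n+nm"
  define M where "M = k*m+mm"
  define lam where "lam = int (k*l) + int lm + \<chi>"
  define S where "S = Fword (int l) m n"
  define Sld where "Sld = flip_at S (l*nm)"
  define C where "C = n + nm + (k-x)*n"
  define W where "W = Sld @ drop np S @ wpow S (k - x) @ wpow Sld (x - 1)"
  have nx: "nat (int k - \<chi>) = k - x" "nat (\<chi> - 1) = x - 1" using x by auto
  have MN: "M*n + 1 = N*m"
  proof -
    have "M*n + 1 = k*m*n + (mm*n + 1)" by (simp add: M_def algebra_simps)
    also have "\<dots> = k*m*n + m*nm" using relm by simp
    finally show ?thesis by (simp add: N_def algebra_simps)
  qed
  have npn: "np < n" "nm < n" using nsum nm1 np1 by linarith+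
  have kx: "C + (x-1)*n = N"
  proof -
    define q where "q = k - x"
    have q: "q + 1 + (x - 1) = k" using x unfolding q_def by simp
    have "C + (x-1)*n = (q + 1 + (x-1))*n + nm" unfolding C_def q_def by (simp add: algebra_simps)
    then show ?thesis using q unfolding q_def N_def by simp
  qed
  have lS: "length S = n" "length Sld = n" by (simp_all add: S_def Sld_def)
  have ld: "length (drop np S) = nm" using lS nsum by simp
  have lenR: "length W = N"
    unfolding W_def using kx ld lS unfolding C_def by (simp del: length_drop)
  have h1: "int l * int nm = int lm * int n + int c"
    unfolding lm_def c_def by (metis of_nat_add of_nat_mult div_mult_mod_eq mult.commute)
  have lamn: "lam * int n = int N * int l - int c + int x * int n"
    unfolding lam_def N_def using h1 x(1) by (simp add: algebra_simps)
  have xnN: "int x * int n + int n \<le> int k * int n"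
    using x(3) by (metis add.commute mult_Suc of_nat_add of_nat_le_iff of_nat_mult Suc_leI mult_le_mono1)
  have xnN': "int x * int n < int N" using xnN npos unfolding N_def by simp
  have cxn: "int c < int x * int n"
  proof -
    have "1 * int n \<le> int x * int n" using x(2) by (intro mult_right_mono) simp_all
    then show ?thesis using c_lt by linarith
  qed
  have lampos: "0 < lam"
  proof -
    have "0 \<le> int k * int l + int lm" by simp
    moreover have "lam = int k * int l + int lm + int x" unfolding lam_def using x(1) by simp
    ultimately show ?thesis using x(2) by linarith
  qed
  have Sld_nth': "\<And>t. t < n \<Longrightarrow> Sld ! t = (if (int t * int m) mod int n < int l \<or> int t = int c then L else R)"
    unfolding Sld_def S_def using Sld_nth by simp
  show ?thesis
    unfolding nx S_def[symmetric] Sld_def[symmetric] lam_def[symmetric] N_def[symmetric] M_def[symmetric] W_def[symmetric]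
  proof (rule nth_equalityI)
    show "length (Fword lam M N) = length W"
      using lenR by simp
    fix i assume "i < length (Fword lam M N)"
    then have iN: "i < N" by simp
    have G: "Fword lam M N ! i = (if int ((i*M) mod N) < lam then L else R)"
      using iN by (simp add: Fword_nth)
    show "Fword lam M N ! i = W ! i"
    proof (cases "i = 0")
      case True
      have "W ! 0 = Sld ! 0" unfolding W_def using lS npos by (simp add: nth_append)
      then show ?thesis using G lampos l0 npos c_pos True Sld_nth'[of 0] by simp
    next
      case False
      then have i0: "0 < i" by simp
      define sv where "sv = (int i * int m - 1) mod int n"
      have sv: "0 \<le> sv" "sv < int n" unfolding sv_def using npos by auto
      have key: "n * ((i*M) mod N) + i = N*((i*m - 1) mod n + 1)" using keyM[OF MN i0 iN npos m0] .
      have key2: "int n * int ((i*M) mod N) = int N * (sv + 1) - int i"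
      proof -
        have "int (n * ((i*M) mod N) + i) = int (N*((i*m - 1) mod n + 1))" using key by simp
        then show ?thesis using sv_fact[OF i0] unfolding sv_def by (simp add: algebra_simps)
      qed
      have GL: "int ((i*M) mod N) < lam \<longleftrightarrow> int N * (sv + 1) - int i < int N * int l - int c + int x * int n"
      proof -
        have "int ((i*M) mod N) < lam \<longleftrightarrow> int n * int ((i*M) mod N) < int n * lam"
          using npos by simp
        then show ?thesis using key2 lamn by (simp add: mult.commute)
      qed
      have charG: "int N * (sv + 1) - int i < int N * int l - int c + int x * int n \<longleftrightarrow>
          sv < int l \<or> (sv = int l \<and> int N + int c - int x * int n < int i)"
      proof (cases "sv < int l")
        case True
        then have "int N * (sv + 1) \<le> int N * int l" by (intro mult_left_mono) auto
        moreover have "0 \<le> int i" by simp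
        ultimately have "int N * (sv + 1) - int i < int N * int l - int c + int x * int n" using cxn by linarith
        then show ?thesis using True by simp
      next
        case False
        show ?thesis
        proof (cases "sv = int l")
          case True
          then have "int N * (sv + 1) = int N * int l + int N" by (simp add: algebra_simps)
          then show ?thesis using True by (intro iffI; auto)
        next
          case False2: False
          then have "int N * (int l + 2) \<le> int N * (sv + 1)" using False by (intro mult_left_mono) auto
          then have y: "int N * int l + 2 * int N \<le> int N * (sv + 1)" by (simp add: algebra_simps)
          have "int i < int N" using iN by simp
          moreover have "0 \<le> int c" by simp
          ultimately have "\<not> (int N * (sv + 1) - int i < int N * int l - int c + int x * int n)" using y xnN' by linarith
          then show ?thesis using False False2 by simp
        qed
      qed
      have GV: "Fword lam M N ! i = (if sv < int l \<or> (sv = int l \<and> int N + int c - int x * int n < int i) then L else R)"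
        using G GL charG by simp
      have posl: "sv = int l \<Longrightarrow> (int N + int c - int x * int n < int i \<longleftrightarrow> int C \<le> int i)"
      proof -
        assume h: "sv = int l"
        have relmi: "int m * int nm = int mm * int n + 1" by (rule relm_int)
        have "(int i - int nm) * int m = (int i * int m - 1) + int n * (- int mm)"
          using relmi by (simp add: algebra_simps)
        then have "((int i - int nm) * int m) mod int n = sv" unfolding sv_def by (metis mod_mult_self2)
        then have "(int i - int nm) mod int n = int c" using res_l[of "int i - int nm"] h by simp
        then have e: "int c + (int k - int x) * int n < int i - int nm \<longleftrightarrow> (1 + (int k - int x)) * int n \<le> int i - int nm"
          using modpos_int[of "int i - int nm" "int n" "int c" "int k - int x"] c_lt npos by simp
        have e1: "int C = int n + int nm + int (k-x) * int n" unfolding C_def by (simp only: of_nat_add of_nat_mult)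
        have e2: "int (k - x) = int k - int x" using x(3) by simp
        have "int C = (1 + (int k - int x)) * int n + int nm" unfolding e1 e2 by (simp add: algebra_simps)
        moreover have "int N + int c - int x * int n = int c + (int k - int x) * int n + int nm"
          unfolding N_def by (simp add: algebra_simps)
        ultimately show ?thesis using e by linarith
      qed
      have rimsv: "(int i * int m) mod int n = (sv + 1) mod int n"
        unfolding sv_def by (metis diff_add_cancel mod_add_left_eq)
      have WV: "W ! i = (if sv < int l \<or> (sv = int l \<and> C \<le> i) then L else R)"
      proof (cases "i < n")
        case True
        have Wi: "W ! i = Sld ! i" unfolding W_def using True lS by (simp add: nth_append)
        have imn: "i mod n = i" using True by simp
        have "i mod n \<noteq> 0" using imn i0 by simp
        then have "int i mod int n \<noteq> 0" by (metis of_nat_0 of_nat_eq_iff zmod_int)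
        then have rne: "(int i * int m) mod int n \<noteq> 0" using res_0[of "int i"] by simp
        then have "sv + 1 \<noteq> int n" using rimsv by auto
        then have rr: "(int i * int m) mod int n = sv + 1" using rimsv sv by simp
        have "int i = int c \<longleftrightarrow> (int i * int m) mod int n = int l"
          using res_l[of "int i"] imn by (metis of_nat_eq_iff zmod_int)
        then have "W ! i = (if sv < int l then L else R)"
          using Wi Sld_nth'[OF True] rr by auto
        moreover have "\<not> C \<le> i" using True unfolding C_def by simp
        ultimately show ?thesis by simp
      next
        case False
        show ?thesis
        proof (cases "i < C")
          case True
          have "\<exists>t<n. W ! i = S ! t \<and> int n dvd (int t - int i - int np)"
          proof (cases "i < n + nm")
            case True
            have f: "\<not> i < n" "i - n < nm" using True False by auto
            have "W ! i = drop np S ! (i - n)" unfolding W_def using f ld lS by (simp add: nth_append del: length_drop)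
            also have "\<dots> = S ! (np + (i - n))" using f lS nsum by simp
            finally have "W ! i = S ! (np + (i - n))" .
            moreover have "np + (i - n) < n" using f nsum by linarith
            moreover have "int (np + (i - n)) - int i - int np = int n * (- 1)"
              using False by (simp add: algebra_simps of_nat_diff)
            ultimately show ?thesis by (metis dvd_triv_left)
          next
            case False2: False
            have f: "\<not> i < n" "\<not> i - n < nm" "i - n - nm < (k-x)*n"
              using False False2 \<open>i < C\<close> unfolding C_def by auto
            have "W ! i = S ! ((i - n - nm) mod n)"
              unfolding W_def using f ld lS by (simp add: nth_append wpow_nth del: length_drop)
            moreover have "(i - n - nm) mod n < n" using npos by simp
            moreover have "int ((i - n - nm) mod n) - int i - int np = int n * (- ((int i - int n - int nm) div int n) - 2)"
            proof -
              have "int ((i - n - nm) mod n) = (int i - int n - int nm) mod int n"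
                using False2 by (simp add: zmod_int of_nat_diff algebra_simps)
              also have "\<dots> = (int i - int n - int nm) - int n * ((int i - int n - int nm) div int n)"
                by (simp add: minus_div_mult_eq_mod[symmetric] algebra_simps)
              finally show ?thesis using nsum by (simp add: algebra_simps)
            qed
            ultimately show ?thesis by (metis dvd_triv_left)
          qed
          then obtain t where t: "t < n" "W ! i = S ! t" "int n dvd (int t - int i - int np)" by blast
          have tm: "(int t * int m) mod int n = sv" using shift[OF t(3)] unfolding sv_def .
          have "W ! i = (if sv < int l then L else R)"
            using t(2) S_nth[OF t(1)] tm unfolding S_def by simp
          then show ?thesis using True by simp
        next
          case False2: False
          define t where "t = (i - C) mod n"
          have tn: "t < n" unfolding t_def using npos by simp
          have f: "\<not> i < n" "\<not> i - n < nm" "\<not> i - n - nm < (k-x)*n" "i - n - nm - (k-x)*n = i - C"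
              "i - C < (x-1)*n"
            using False False2 iN kx unfolding C_def by auto
          have Wi: "W ! i = Sld ! t"
            unfolding W_def t_def using f ld lS by (simp add: nth_append wpow_nth del: length_drop)
          define D where "D = (int i - int C) div int n"
          have "int t = (int i - int C) mod int n"
            unfolding t_def using False2 by (simp add: zmod_int of_nat_diff)
          also have "\<dots> = (int i - int C) - int n * D"
            unfolding D_def by (simp add: minus_div_mult_eq_mod[symmetric] algebra_simps)
          finally have tD: "int t = int i - int C - int n * D" .
          have Ci: "int C = int n + int nm + (int k - int x) * int n"
            unfolding C_def using x(3) by (simp only: of_nat_add of_nat_mult of_nat_diff less_imp_le_nat)
          have ns: "int nm + int np = int n" using nsum by (metis of_nat_add)
          have "int t - int i - int np = int n * (- D - 2 - (int k - int x))"
            using tD Ci ns by (simp add: algebra_simps)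
          then have "int n dvd (int t - int i - int np)" by (metis dvd_triv_left)
          then have tm: "(int t * int m) mod int n = sv" using shift unfolding sv_def by blast
          have "int t = int c \<longleftrightarrow> sv = int l"
            using res_l[of "int t"] tm tn by (metis of_nat_eq_iff zmod_int mod_less)
          then have "W ! i = (if sv < int l \<or> sv = int l then L else R)"
            using Wi Sld_nth'[OF tn] tm by auto
          then show ?thesis using False2 by simp
        qed
      qed
      show ?thesis using GV WV posl by auto
    qed
  qed
qed

end


theorem proposition3p8:
  fixes l m n d mm nm mp np k :: nat and \<chi> :: int
  assumes "0 < l" "l < n" "0 < m" "m < n" "coprime m n"
    and "1 \<le> d" "d \<le> n - 1" "(m * d) mod n = 1"
    and "1 \<le> nm" "1 \<le> np" "mm + mp = m" "nm + np = n"
    and "int mp * int nm - int mm * int np = 1"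
    and "0 < k" "\<bar>\<chi>\<bar> < int k"
  shows
    "let S = Fword (int l) m n;
         Xh = take (n - d) S; Yh = drop (n - d) S;
         S0 = flip_at S 0; Sld = flip_at S (l * d);
         lp = \<lceil>real (l * np) / real n\<rceil>;
         lm = \<lfloor>real (l * nm) / real n\<rfloor>;
         Gp = Fword (int (k * l) + lp + \<chi>) (k * m + mp) (k * n + np);
         Gm = Fword (int (k * l) + lm + \<chi>) (k * m + mm) (k * n + nm)
     in Gp = (if \<chi> < 0 then wpow S (nat (int k + \<chi>)) @ Xh @ wpow S0 (nat (- \<chi>))
              else wpow Sld (nat \<chi>) @ wpow S (nat (int k - \<chi>)) @ Xh)
      \<and> Gm = (if \<chi> \<le> 0 then S @ wpow S0 (nat (- \<chi>)) @ Yh @ wpow S (nat (int k + \<chi> - 1))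
              else Sld @ Yh @ wpow S (nat (int k - \<chi>)) @ wpow Sld (nat (\<chi> - 1)))"
proof -
  have mmi: "int mm + int mp = int m" "int nm + int np = int n" using assms(11,12) by (metis of_nat_add)+
  have "int m * int np + 1 = int mp * int n"
  proof -
    have "int m * int np + 1 = (int mm + int mp) * int np + (int mp * int nm - int mm * int np)"
      using mmi assms(13) by simp
    also have "\<dots> = int mp * (int nm + int np)" by (simp add: algebra_simps)
    finally show ?thesis using mmi by simp
  qed
  then have relp: "m*np + 1 = mp*n" by (metis of_nat_1 of_nat_add of_nat_eq_iff of_nat_mult)
  have "int m * int nm = int mm * int n + 1"
  proof -
    have "int m * int nm = (int mm + int mp) * int nm" using mmi by simp
    also have "\<dots> = int mm * (int nm + int np) + (int mp * int nm - int mm * int np)" by (simp add: algebra_simps)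
    finally show ?thesis using mmi assms(13) by simp
  qed
  then have relm: "m*nm = mm*n + 1" by (metis of_nat_1 of_nat_add of_nat_eq_iff of_nat_mult)
  interpret F: fsetup l m n nm np mm mp
    using assms relp relm by unfold_locales auto
  have dn: "d = nm"
  proof -
    have "int d mod int n = (int d * int m * int nm) mod int n" using F.inv_int by simp
    also have "\<dots> = (((int d * int m) mod int n) * int nm) mod int n" by (simp add: mod_mult_left_eq)
    also have "\<dots> = ((int (m*d) mod int n) * int nm) mod int n" by (simp add: mult.commute)
    also have "\<dots> = int nm mod int n"
    proof -
      have "int ((m*d) mod n) = 1" using assms(8) by simp
      then have "int (m*d) mod int n = 1" by (simp only: zmod_int)
      then show ?thesis by simp
    qed
    finally have "int d mod int n = int nm mod int n" .
    moreover have "d < n" "nm < n" using assms(7,2,12,10) by linarith+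
    ultimately have "int (d mod n) = int (nm mod n)" by (simp only: zmod_int)
    then have "d mod n = nm mod n" by (simp only: of_nat_eq_iff)
    then show ?thesis using \<open>d < n\<close> \<open>nm < n\<close> by simp
  qed
  have lmE: "\<lfloor>real (l * nm) / real n\<rfloor> = int F.lm"
    unfolding F.lm_def by (metis floor_divide_of_nat_eq of_nat_mult)
  have lpE: "\<lceil>real (l * np) / real n\<rceil> = int l - int F.lm"
  proof -
    have "real (l * np) / real n = real l - real (l * nm) / real n"
      using assms(12) F.npos by (simp add: field_simps flip: of_nat_add distrib_left)
    then have "\<lceil>real (l * np) / real n\<rceil> = \<lceil>real l - real (l * nm) / real n\<rceil>" by simp
    also have "\<dots> = - \<lfloor>real (l * nm) / real n - real l\<rfloor>"
      by (metis ceiling_minus minus_diff_eq)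
    also have "\<dots> = int l - \<lfloor>real (l * nm) / real n\<rfloor>"
      using floor_diff_of_int[of "real (l * nm) / real n" "int l"] by simp
    finally show ?thesis using lmE by simp
  qed
  have nd: "n - nm = np" using assms(12) by simp
  have ch: "- \<chi> < int k" "\<chi> < int k" using assms(15) by auto
  show ?thesis
    unfolding Let_def dn nd lpE lmE
    apply (intro conjI)
    subgoal using F.Gp_neg[of \<chi> k] F.Gp_nonneg[of \<chi> k] ch by (cases "\<chi> < 0") simp_all
    subgoal using F.Gm_nonpos[of \<chi> k] F.Gm_pos[of \<chi> k] ch by (cases "\<chi> \<le> 0") simp_all
    done
qed


end
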